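(* Let $\mathcal{M} = \{ t \in \mathbb{C}_2 : \text{the forward orbits of both critical points } 0 \text{ and } 1 \text{ under } f_t \text{ are bounded}\}$. Then $1 \in \mathcal{M}$, and $t = 1$ is a non-isolated boundary point of $\mathcal{M}$. That is, every $2$-adic neighborhood of $1$ in $\mathbb{C}_2$ contains parameters $t \notin \mathcal{M}$ and also parameters $t \in \mathcal{M}$ with $t \neq 1$.
   Context: Let $|\cdot|$ denote the $2$-adic absolute value on $\mathbb{C}_2$, normalized by $|2| = 1/2$. For $t \in \mathbb{C}_2$, let $f_t(z) = -\tfrac32 t(-2z^3+3z^2) + 1 \in \mathbb{C}_2[z]$. The critical points of $f_t$ are $0$ and $1$. Since $f_t(0) = 1$, the orbit of $0$ is bounded if and only if the orbit of $1$ is bounded. The forward orbit of $z$ under $f$ is $\{f^n(z) : n \ge 0\}$, where $f^n$ is the $n$-fold iterate of $f$. A map is called post-critically bounded (PCB) if all critical points have bounded forward orbits, and post-critically finite (PCF) if all critical points have finite forward orbits. *)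

theory Defs
  imports "HOL-Computational_Algebra.Polynomial"
begin

text \<open>C_2 is characterized up to isometric isomorphism as a field of characteristic 0
with a non-archimedean absolute value restricting to the 2-adic absolute value on the
integers (|2| = 1/2, |odd| = 1), which is complete, algebraically closed, and in which
the algebraic numbers (over Q) are dense.  The theorem is stated for every such field.\<close>

definition is_algebraic_num :: "'a::field_char_0 \<Rightarrow> bool" where
  "is_algebraic_num y \<longleftrightarrow> (\<exists>p::int poly. p \<noteq> 0 \<and> poly (map_poly of_int p) y = 0)"

definition is_C2_model :: "('a::field_char_0 \<Rightarrow> real) \<Rightarrow> bool" where
  "is_C2_model absv \<longleftrightarrow>
     (\<forall>x. absv x \<ge> 0) \<and> (\<forall>x. absv x = 0 \<longleftrightarrow> x = 0) \<and>
     (\<forall>x y. absv (x * y) = absv x * absv y) \<and>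
     (\<forall>x y. absv (x + y) \<le> max (absv x) (absv y)) \<and>
     absv 2 = 1/2 \<and>
     (\<forall>n::int. odd n \<longrightarrow> absv (of_int n) = 1) \<and>
     (\<forall>X::nat \<Rightarrow> 'a. (\<forall>e>0. \<exists>N. \<forall>m\<ge>N. \<forall>n\<ge>N. absv (X m - X n) < e)
          \<longrightarrow> (\<exists>L. \<forall>e>0. \<exists>N. \<forall>n\<ge>N. absv (X n - L) < e)) \<and>
     (\<forall>p::'a poly. degree p > 0 \<longrightarrow> (\<exists>z. poly p z = 0)) \<and>
     (\<forall>x e. e > 0 \<longrightarrow> (\<exists>y. is_algebraic_num y \<and> absv (x - y) < e))"

definition fmap :: "'a::field_char_0 \<Rightarrow> 'a \<Rightarrow> 'a" where
  "fmap t z = - (3/2) * t * (- 2 * z ^ 3 + 3 * z ^ 2) + 1"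

definition bounded_orbit :: "('a::field_char_0 \<Rightarrow> real) \<Rightarrow> 'a \<Rightarrow> 'a \<Rightarrow> bool" where
  "bounded_orbit absv t z \<longleftrightarrow> (\<exists>B. \<forall>n. absv ((fmap t ^^ n) z) \<le> B)"

definition PCB_locus :: "('a::field_char_0 \<Rightarrow> real) \<Rightarrow> 'a set" where
  "PCB_locus absv = {t. bounded_orbit absv t 0 \<and> bounded_orbit absv t 1}"

end

theory Submission
  imports Defs
begin

locale na =
  fixes a :: "'a::field_char_0 \<Rightarrow> real"
  assumes nonneg: "a x \<ge> 0" and zero: "a x = 0 \<longleftrightarrow> x = 0"
    and mult: "a (x*y) = a x * a y" and ultra: "a (x+y) \<le> max (a x) (a y)"
    and two: "a 2 = 1/2" and oddv: "odd n \<Longrightarrow> a (of_int n) = 1"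
    and alg: "degree (p::'a poly) > 0 \<Longrightarrow> \<exists>z. poly p z = 0"
begin

lemma one[simp]: "a 1 = 1" using oddv[of 1] by simp
lemma three[simp]: "a 3 = 1" using oddv[of 3] by simp
lemma nine[simp]: "a 9 = 1" using oddv[of 9] by simp
lemma t27[simp]: "a 27 = 1" using oddv[of 27] by simp
lemma mone: "a (-1) = 1" using oddv[of "-1"] by simp
lemma uminus[simp]: "a (-x) = a x"
  using mult[of "-1" x] mone by simp
lemma inv: "a (inverse x) = 1 / a x"
proof (cases "x = 0")
  case False
  then have "a (x * inverse x) = 1" by simp
  moreover have "a x \<noteq> 0" using False zero by simp
  ultimately show ?thesis using mult[of x "inverse x"] by (simp add: field_simps)
qed (use zero[of 0] in simp)
lemma divi[simp]: "a (x / y) = a x / a y"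
  by (simp add: divide_inverse mult inv)
lemma pow[simp]: "a (x ^ n) = a x ^ n"
  by (induction n) (simp_all add: mult)
lemma four[simp]: "a 4 = 1/4"
  using mult[of 2 2] two by simp
lemma zero0[simp]: "a 0 = 0" using zero by simp
lemma half[simp]: "a (1/2) = 2" by (simp only: divi one two) simp
lemma thalf[simp]: "a (3/2) = 2" by (simp only: divi three two) simp
lemma nhalf[simp]: "a (9/2) = 2" by (simp only: divi nine two) simp
lemma t274[simp]: "a (27/4) = 4" by (simp only: divi t27 four) simp

declare two[simp]

lemma strict: assumes "a y < a x" shows "a (x + y) = a x"
proof -
  have 1: "a (x + y) \<le> a x" using ultra[of x y] assms by simp
  have "a x \<le> max (a (x+y)) (a (-y))" using ultra[of "x+y" "-y"] by simp
  then have "a x \<le> a (x+y)" using assms by (auto simp: max_def split: if_splits)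
  with 1 show ?thesis by simp
qed

lemma strict2: assumes "a y < a x" shows "a (y + x) = a x"
  using strict[OF assms] by (simp add: add.commute)

lemma strict_diff: assumes "a y < a x" shows "a (x - y) = a x"
  using strict[of "-y" x] assms by simp

lemma strict_diff2: assumes "a y < a x" shows "a (y - x) = a x"
  using strict_diff[OF assms] by (metis minus_diff_eq uminus)


lemma root_disk:
  "\<forall>P. degree P = n \<longrightarrow> P \<noteq> 0 \<longrightarrow> (\<forall>r. poly P r = 0 \<longrightarrow> a r > \<rho>)
     \<longrightarrow> (\<forall>s. a s \<le> \<rho> \<longrightarrow> a (poly P s) = a (poly P 0))"
proof (induction n)
  case 0
  show ?case
  proof (intro allI impI)
    fix P :: "'a poly" and s assume "degree P = 0"
    then obtain c where "P = [:c:]" by (metis degree_eq_zeroE)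
    then show "a (poly P s) = a (poly P 0)" by simp
  qed
next
  case (Suc n)
  show ?case
  proof (intro allI impI)
    fix P :: "'a poly" and s
    assume d: "degree P = Suc n" and nz: "P \<noteq> 0" and nr: "\<forall>r. poly P r = 0 \<longrightarrow> a r > \<rho>"
      and s: "a s \<le> \<rho>"
    obtain r where r: "poly P r = 0" using alg[of P] d by auto
    then obtain Q where PQ: "P = [:-r,1:] * Q" using poly_eq_0_iff_dvd by blast
    have Qnz: "Q \<noteq> 0" using nz PQ by auto
    have "degree P = 1 + degree Q" unfolding PQ using Qnz degree_mult_eq[of "[:-r,1:]" Q] by (simp del: mult_pCons_left)
    then have dQ: "degree Q = n" using d by simp
    have "\<forall>r. poly Q r = 0 \<longrightarrow> a r > \<rho>" using nr PQ by auto
    then have IH: "a (poly Q s) = a (poly Q 0)" using Suc.IH dQ Qnz s by blast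
    have ar: "a r > \<rho>" using nr r by auto
    have "a (s - r) = a r" using strict_diff2[of s r] ar s by simp
    moreover have "poly P s = (s - r) * poly Q s" "poly P 0 = (-r) * poly Q 0"
      unfolding PQ by (simp_all add: algebra_simps)
    ultimately show "a (poly P s) = a (poly P 0)" using IH by (simp only: mult uminus)
  qed
qed

lemma root_exists:
  assumes "P \<noteq> 0" "a s \<le> \<rho>" "a (poly P s) \<noteq> a (poly P 0)"
  shows "\<exists>r. poly P r = 0 \<and> a r \<le> \<rho>"
  using root_disk[of "degree P" \<rho>] assms by force

end


lemma cube: fixes x :: real assumes "4 \<le> x" shows "x + 1 \<le> x*x*x"
proof -
  have "16 \<le> x*x" using mult_mono[OF assms assms] assms by simp
  then have "x*16 \<le> x*(x*x)" using assms by (intro mult_left_mono) auto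
  moreover have "x*x*x = x*(x*x)" by (simp only: mult.assoc)
  ultimately show ?thesis using assms by linarith
qed

lemma key: "fmap t z + 1/2 = (fmap t 1 + 1/2) + 3*t*(z+1/2)*((z+1/2) - 3/2)^2"
  unfolding fmap_def by (simp add: field_simps power2_eq_square power3_eq_cube)

lemma f1: "fmap t 1 + 1/2 = -3/2 * (t - 1)"
  unfolding fmap_def by (simp add: field_simps)

lemma fhalf: "fmap t (-1/2) = fmap t 1"
  unfolding fmap_def by (simp add: field_simps power2_eq_square power3_eq_cube)

lemma fexp: "fmap t z = 3*t*z^3 + (1 - 9/2*t*z^2)"
  unfolding fmap_def by (simp add: field_simps)

fun Vp :: "nat \<Rightarrow> 'a::field_char_0 poly" where
  "Vp 0 = [:-3/2:]"
| "Vp (Suc n) = [:-3/2:] + smult 3 ([:1,1:] * Vp n * ([:0,1:] * Vp n - [:3/2:])^2)"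

lemma poly_Vp: "poly (Vp (Suc n)) s = -3/2 + 3*(1+s)*poly (Vp n) s*(s*poly (Vp n) s - 3/2)^2"
  by (simp add: algebra_simps)

lemma orbit_V: "(fmap (1+s) ^^ Suc n) 1 + 1/2 = s * poly (Vp n) s"
proof (induction n)
  case 0
  show ?case using f1[of "1+s"] by simp
next
  case (Suc n)
  define w where "w = (fmap (1+s) ^^ Suc n) 1"
  have e: "w + 1/2 = s * poly (Vp n) s" using Suc w_def by simp
  have "(fmap (1+s) ^^ Suc (Suc n)) 1 + 1/2 = fmap (1+s) w + 1/2" by (simp add: w_def)
  also have "\<dots> = (fmap (1+s) 1 + 1/2) + 3*(1+s)*(w+1/2)*((w+1/2) - 3/2)^2" by (rule key)
  also have "\<dots> = -3/2*s + 3*(1+s)*(s * poly (Vp n) s)*((s * poly (Vp n) s) - 3/2)^2"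
    by (simp only: e f1) simp
  also have "\<dots> = s * poly (Vp (Suc n)) s" by (simp only: poly_Vp) (simp add: algebra_simps)
  finally show ?case .
qed

lemma periodic:
  assumes "(fmap t ^^ Suc n) 1 = -1/2"
  shows "\<forall>k. (fmap t ^^ k) 1 \<in> (\<lambda>j. (fmap t ^^ j) 1) ` {..Suc n}"
proof -
  let ?z = "\<lambda>j. (fmap t ^^ j) 1"
  have per: "?z (Suc k + Suc n) = ?z (Suc k)" for k
  proof -
    have "Suc k + Suc n = k + Suc (Suc n)" by simp
    then have "?z (Suc k + Suc n) = (fmap t ^^ k) ((fmap t ^^ Suc (Suc n)) 1)"
      by (simp only: funpow_add comp_apply)
    also have "(fmap t ^^ Suc (Suc n)) 1 = fmap t 1" using assms fhalf[of t] by simp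
    also have "(fmap t ^^ k) (fmap t 1) = ?z (Suc k)" by (simp only: funpow_Suc_right comp_apply)
    finally show ?thesis .
  qed
  have "?z k \<in> ?z ` {..Suc n}" for k
  proof (induction k rule: less_induct)
    case (less k)
    show ?case
    proof (cases "k \<le> Suc n")
      case True then show ?thesis by auto
    next
      case False
      define k' where "k' = k - Suc (Suc n)"
      have k: "k = Suc k' + Suc n" using False k'_def by simp
      have eq: "?z k = ?z (Suc k')" unfolding k by (rule per)
      have "Suc k' < k" using k by simp
      from less[OF this] show ?thesis unfolding eq .
    qed
  qed
  then show ?thesis by blast
qed

context na
begin

lemma bounded_of_periodic:
  assumes "(fmap t ^^ Suc n) 1 = -1/2"
  shows "t \<in> PCB_locus a"
proof -
  let ?z = "\<lambda>j. (fmap t ^^ j) 1"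
  have mem: "?z k \<in> ?z ` {..Suc n}" for k using periodic[OF assms] by blast
  define B where "B = Max (a ` ?z ` {..Suc n})"
  have b1: "a (?z k) \<le> B" for k unfolding B_def using mem[of k] by (intro Max_ge) auto
  have B0: "0 \<le> B" using b1[of 0] nonneg[of 1] by simp
  have o1: "bounded_orbit a t 1" unfolding bounded_orbit_def using b1 by blast
  have "a ((fmap t ^^ k) 0) \<le> B" for k
  proof (cases k)
    case 0 then show ?thesis using B0 by simp
  next
    case (Suc k')
    have "(fmap t ^^ Suc k') 0 = (fmap t ^^ k') (fmap t 0)" by (simp only: funpow_Suc_right o_def)
    also have "fmap t 0 = 1" by (simp add: fmap_def)
    finally show ?thesis using b1[of k'] Suc by simp
  qed
  then have "bounded_orbit a t 0" unfolding bounded_orbit_def by blast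
  then show ?thesis using o1 unfolding PCB_locus_def by simp
qed

lemma escape1:
  assumes "a t = 1" "a z \<ge> 4"
  shows "a (fmap t z) = a z ^ 3"
proof -
  have A: "a (3*t*z^3) = a z ^ 3" using assms by (simp add: mult)
  have "a (1 - 9/2*t*z^2) \<le> max (a 1) (a (9/2*t*z^2))"
    using ultra[of 1 "-(9/2*t*z^2)"] by simp
  also have "\<dots> = max 1 (2 * a z ^ 2)" using assms by (simp only: mult one nhalf pow)
  also have "\<dots> < a z ^ 3"
  proof -
    have "a z ^ 3 = a z * a z ^ 2" by (simp add: power3_eq_cube power2_eq_square)
    moreover have "a z ^ 2 \<ge> 16" using assms power_mono[of 4 "a z" 2] by simp
    ultimately have "a z ^ 3 \<ge> 4 * a z ^ 2" using assms by (simp add: mult_right_mono)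
    then show ?thesis using \<open>a z ^ 2 \<ge> 16\<close> by simp
  qed
  finally show ?thesis using strict[of "1 - 9/2*t*z^2" "3*t*z^3"] A fexp[of t z] by simp
qed

lemma escape:
  assumes "a t = 1" "a ((fmap t ^^ N) 1) \<ge> 4"
  shows "t \<notin> PCB_locus a"
proof -
  have g: "a ((fmap t ^^ (k + N)) 1) \<ge> 4 + real k" for k
  proof (induction k)
    case 0 then show ?case using assms by simp
  next
    case (Suc k)
    let ?w = "(fmap t ^^ (k + N)) 1"
    have "a (fmap t ?w) = a ?w ^ 3" using escape1[OF assms(1)] Suc by simp
    moreover have "a ?w ^ 3 \<ge> a ?w + 1"
    proof -
      have "4 \<le> a ?w" using Suc by simp
      then show ?thesis using cube[of "a ?w"] by (simp add: power3_eq_cube)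
    qed
    ultimately show ?case using Suc by simp
  qed
  have "\<not> bounded_orbit a t 1"
  proof
    assume "bounded_orbit a t 1"
    then obtain B where B: "\<forall>n. a ((fmap t ^^ n) 1) \<le> B" unfolding bounded_orbit_def by blast
    obtain k :: nat where k: "real k > B" using reals_Archimedean2 by blast
    have "a ((fmap t ^^ (k + N)) 1) \<le> B" using B by blast
    then show False using g[of k] k by linarith
  qed
  then show ?thesis unfolding PCB_locus_def by simp
qed


lemma V0: "a (poly (Vp n) 0) = 2 * 4^n"
proof (induction n)
  case 0
  have "poly (Vp 0) (0::'a) = -(3/2)" by simp
  then show ?case by (simp only: uminus thalf) simp
next
  case (Suc n)
  have e: "poly (Vp (Suc n)) 0 = -(3/2) + 27/4 * poly (Vp n) 0"
    by (simp only: poly_Vp) (simp add: power2_eq_square field_simps)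
  have "a (27/4 * poly (Vp n) 0) = 4 * (2 * 4^n)" using Suc by (simp only: mult t274)
  moreover have "a (-(3/2)) < 4 * (2 * 4^n)"
  proof -
    have "(1::real) \<le> 4^n" by simp
    then have "(1::real) < 4 * 4^n" by linarith
    then show ?thesis by simp
  qed
  ultimately show ?case unfolding e using strict2[of "-(3/2)" "27/4 * poly (Vp n) 0"] by simp
qed

lemma pow4: "(4::real)^m * (1/4)^m = 1"
  by (simp add: power_mult_distrib[symmetric])

lemma near:
  fixes m :: nat
  shows "(\<exists>t. a (t - 1) \<le> 1/2*(1/4)^m \<and> t \<notin> PCB_locus a) \<and>
         (\<exists>t. a (t - 1) \<le> 1/2*(1/4)^m \<and> t \<in> PCB_locus a \<and> t \<noteq> 1)"
proof -
  define s0 :: 'a where "s0 = 2 * 4^m"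
  define t where "t = 1 + s0"
  define q where "q = a s0"
  have q: "q = 1/2*(1/4)^m" unfolding q_def s0_def by (simp only: mult two pow four)
  have qpos: "0 < q" unfolding q by simp
  have q1: "q < 1"
  proof -
    have "(1/4::real)^m \<le> 1" by (rule power_le_one) auto
    then show ?thesis unfolding q by simp
  qed
  have F1: "2*4^j*q \<le> 1" if "j \<le> m" for j
  proof -
    have "(4::real)^j \<le> 4^m" using that by (simp add: power_increasing)
    then have "4^j*(1/4)^m \<le> (4::real)^m * (1/4)^m" by (simp add: mult_right_mono)
    then show ?thesis unfolding q using pow4[of m] by simp
  qed
  have F2: "2*4^(m+1)*q = 4" unfolding q using pow4[of m] by simp
  have F3: "2*q \<le> 2*4^j*q" for j
  proof -
    have "(1::real) \<le> 4^j" by simp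
    then show ?thesis using qpos by simp
  qed
  have at: "a t = 1" unfolding t_def using strict[of s0 1] q1 q_def by simp
  define u where "u j = (fmap t ^^ Suc j) 1 + 1/2" for j
  have u0: "u 0 = -(3/2) * s0" unfolding u_def using f1[of t] by (simp add: t_def)
  have au0: "a (u 0) = 2 * q" unfolding u0 q_def by (simp only: mult uminus thalf)
  have ustep: "u (Suc j) = u 0 + 3*t*u j*(u j - 3/2)^2" for j
  proof -
    have e1: "u (Suc j) = fmap t ((fmap t ^^ Suc j) 1) + 1/2" unfolding u_def by simp
    have e2: "u 0 = fmap t 1 + 1/2" unfolding u_def by simp
    show ?thesis unfolding e1 e2 u_def[of j] by (rule key)
  qed
  have grow: "j \<le> m + 1 \<Longrightarrow> a (u j) = 2*4^j*q" for j
  proof (induction j)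
    case 0 then show ?case using au0 by simp
  next
    case (Suc j)
    define w where "w = 2*4^j*q"
    have aw: "a (u j) = w" using Suc w_def by simp
    have w1: "w \<le> 1" using F1[of j] Suc w_def by simp
    have w2: "2*q \<le> w" using F3[of j] w_def by simp
    have "a (u j - 3/2) = 2" using strict_diff2[of "u j" "3/2"] aw w1 by simp
    then have "a (3*t*u j*(u j - 3/2)^2) = 4 * w" using aw at by (simp add: mult)
    moreover have "a (u 0) < 4 * w" using au0 w2 qpos by simp
    ultimately have "a (u (Suc j)) = 4 * w" unfolding ustep using strict2[of "u 0" "3*t*u j*(u j - 3/2)^2"] by simp
    then show ?case unfolding w_def by simp
  qed
  have A4: "a (u (m+1)) = 4" using grow[of "m+1"] F2 by simp
  have z4: "a ((fmap t ^^ Suc (m+1)) 1) = 4"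
  proof -
    have "(fmap t ^^ Suc (m+1)) 1 = u (m+1) - 1/2" unfolding u_def by simp
    then show ?thesis using strict_diff[of "1/2" "u (m+1)"] A4 by simp
  qed
  have notin: "t \<notin> PCB_locus a" using escape[OF at, of "Suc (m+1)"] z4 by linarith
  have "a (u (m+1) - 3/2) = 4" using strict_diff[of "3/2" "u (m+1)"] A4 by simp
  then have "a (3*t*u (m+1)*(u (m+1) - 3/2)^2) = 64" using A4 at by (simp add: mult)
  moreover have "a (u 0) < 64" using au0 q1 by simp
  ultimately have A64: "a (u (m+2)) = 64" using ustep[of "m+1"] strict2[of "u 0" "3*t*u (m+1)*(u (m+1) - 3/2)^2"] by simp
  have us: "u (m+2) = s0 * poly (Vp (m+2)) s0" unfolding u_def t_def by (rule orbit_V)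
  have "a (u (m+2)) = q * a (poly (Vp (m+2)) s0)" unfolding us q_def by (rule mult)
  then have Vs0: "q * a (poly (Vp (m+2)) s0) = 64" using A64 by simp
  have Vz: "a (poly (Vp (m+2)) 0) = 2 * 4^(m+2)" by (rule V0)
  have p16: "q * (2 * 4^(m+2)) = 16"
  proof -
    have "(4::real)^(m+2) = 16 * 4^m" by (simp add: power_add)
    then have "q * (2 * 4^(m+2)) = 16 * (4^m * (1/4)^m)" unfolding q by simp
    then show ?thesis using pow4[of m] by simp
  qed
  have ne: "a (poly (Vp (m+2)) s0) \<noteq> a (poly (Vp (m+2)) 0)"
  proof
    assume "a (poly (Vp (m+2)) s0) = a (poly (Vp (m+2)) 0)"
    then have "q * (2 * 4^(m+2)) = 64" using Vs0 Vz by simp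
    then show False using p16 by simp
  qed
  have V0nz: "poly (Vp (m+2)) (0::'a) \<noteq> 0"
  proof
    assume h: "poly (Vp (m+2)) (0::'a) = 0"
    have "a (poly (Vp (m+2)) 0) = 0" using h zero0 by metis
    then have "(2::real) * 4^(m+2) = 0" using Vz by linarith
    then show False by simp
  qed
  have Pnz: "Vp (m+2) \<noteq> (0::'a poly)" using V0nz by (metis poly_0)
  obtain r where r: "poly (Vp (m+2)) r = 0" "a r \<le> q"
    using root_exists[of "Vp (m+2)" s0 q] Pnz ne q_def by auto
  have rnz: "r \<noteq> 0" using r V0nz by auto
  define zz where "zz = (fmap (1+r) ^^ Suc (m+2)) 1"
  have "zz + 1/2 = 0" unfolding zz_def by (simp only: orbit_V r(1) mult_zero_right)
  then have "zz = 0 - 1/2" by (metis add_diff_cancel_right')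
  then have "zz = -1/2" by simp
  then have "(fmap (1+r) ^^ Suc (m+2)) 1 = -1/2" unfolding zz_def .
  then have inn: "1 + r \<in> PCB_locus a" by (rule bounded_of_periodic)
  have "a (t - 1) = q" unfolding t_def q_def by simp
  then show ?thesis using notin inn r rnz q by (intro conjI exI[of _ t] exI[of _ "1+r"]) auto
qed

end

theorem mainTheorem1:
  fixes absv :: "'a::field_char_0 \<Rightarrow> real"
  assumes "is_C2_model absv"
  shows "1 \<in> PCB_locus absv \<and>
    (\<forall>e>0. (\<exists>t. absv (t - 1) < e \<and> t \<notin> PCB_locus absv) \<and>
           (\<exists>t. absv (t - 1) < e \<and> t \<in> PCB_locus absv \<and> t \<noteq> 1))"
proof -
  interpret na absv
    using assms unfolding is_C2_model_def by unfold_locales auto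
  have "(fmap (1::'a) ^^ Suc 0) 1 = -1/2" by (simp add: fmap_def)
  then have one: "1 \<in> PCB_locus absv" by (rule bounded_of_periodic)
  have "(\<exists>t. absv (t - 1) < e \<and> t \<notin> PCB_locus absv) \<and>
           (\<exists>t. absv (t - 1) < e \<and> t \<in> PCB_locus absv \<and> t \<noteq> 1)" if e: "e > 0" for e
  proof -
    obtain m where m: "(1/4::real)^m < e" using real_arch_pow_inv[OF e, of "1/4"] by auto
    have "1/2*(1/4::real)^m < e" using m zero_le_power[of "1/4::real" m] by linarith
    then show ?thesis using near[of m] by force
  qed
  then show ?thesis using one by blast
qed

end
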